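(* For every $n\ge1$, $\mathcal{S}_n(0021,0121)=\mathcal{S}_n(0121,0132)=\mathcal{S}_n(021)$, and for $0\le m<n$, $S_{n,m}(0021,0121)=S_{n,m}(0121,0132)=N_{n,m+1}$.
   Context: An ascent in a sequence $x_1\cdots x_k$ is an index $j$ with $x_j<x_{j+1}$; $\mathrm{asc}$ denotes the number of ascents. An ascent sequence of length $n$ is a sequence $x_1\cdots x_n$ of non-negative integers with $x_1=0$ and $x_i\le \mathrm{asc}(x_1\cdots x_{i-1})+1$ for $1<i\le n$. A sequence $\pi$ contains a pattern $\tau=\tau_1\cdots\tau_k$ (a sequence of non-negative integers) if some subsequence of $\pi$ of length $k$ is order-isomorphic to $\tau$ (same relative order, equal letters to equal letters); otherwise it avoids $\tau$. $\mathcal{S}_n(T)$ is the set of ascent sequences of length $n$ avoiding all patterns in $T$; $\mathcal{S}_{n,m}(T)$ the subset with exactly $m$ ascents, $S_{n,m}(T)=|\mathcal{S}_{n,m}(T)|$. $N_{n,m}=\frac1n\binom nm\binom n{m-1}$ is the Narayana number. *)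

theory Defs
  imports Complex_Main "HOL-Library.Sublist"
begin

definition asc :: "nat list \<Rightarrow> nat" where
  "asc xs = card {j. Suc j < length xs \<and> xs ! j < xs ! Suc j}"

definition ascent_seq :: "nat list \<Rightarrow> bool" where
  "ascent_seq xs \<longleftrightarrow> xs \<noteq> [] \<and> xs ! 0 = 0 \<and>
     (\<forall>i. 0 < i \<and> i < length xs \<longrightarrow> xs ! i \<le> asc (take i xs) + 1)"

definition order_iso :: "nat list \<Rightarrow> nat list \<Rightarrow> bool" where
  "order_iso a b \<longleftrightarrow> length a = length b \<and>
     (\<forall>i<length a. \<forall>j<length a. (a ! i < a ! j \<longleftrightarrow> b ! i < b ! j) \<and> (a ! i = a ! j \<longleftrightarrow> b ! i = b ! j))"

definition contains :: "nat list \<Rightarrow> nat list \<Rightarrow> bool" where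
  "contains \<pi> \<tau> \<longleftrightarrow> (\<exists>s. subseq s \<pi> \<and> order_iso s \<tau>)"

definition avoids :: "nat list \<Rightarrow> nat list \<Rightarrow> bool" where
  "avoids \<pi> \<tau> \<longleftrightarrow> \<not> contains \<pi> \<tau>"

definition Sn :: "nat \<Rightarrow> nat list set \<Rightarrow> nat list set" where
  "Sn n T = {xs. ascent_seq xs \<and> length xs = n \<and> (\<forall>\<tau>\<in>T. avoids xs \<tau>)}"

definition Snm_set :: "nat \<Rightarrow> nat \<Rightarrow> nat list set \<Rightarrow> nat list set" where
  "Snm_set n m T = {xs \<in> Sn n T. asc xs = m}"

definition Snm :: "nat \<Rightarrow> nat \<Rightarrow> nat list set \<Rightarrow> nat" where
  "Snm n m T = card (Snm_set n m T)"

definition narayana :: "nat \<Rightarrow> nat \<Rightarrow> real" where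
  "narayana n m = (1 / real n) * real (n choose m) * real (n choose (m - 1))"

end

theory Submission
  imports Defs
begin


lemma subseq_idx:
  assumes "subseq s xs"
  shows "\<exists>idx. length idx = length s \<and> sorted_wrt (<) idx \<and> (\<forall>i\<in>set idx. i < length xs) \<and> s = map ((!) xs) idx"
  using assms
proof (induction rule: list_emb.induct)
  case (list_emb_Nil ys)
  then show ?case by (intro exI[of _ "[]"]) auto
next
  case (list_emb_Cons xs ys y)
  then obtain idx where "length idx = length xs" "sorted_wrt (<) idx" "\<forall>i\<in>set idx. i < length ys" "xs = map ((!) ys) idx" by blast
  then show ?case by (intro exI[of _ "map Suc idx"]) (auto simp: sorted_wrt_map)
next
  case (list_emb_Cons2 x y xs ys)
  then obtain idx where "length idx = length xs" "sorted_wrt (<) idx" "\<forall>i\<in>set idx. i < length ys" "xs = map ((!) ys) idx" by blast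
  then show ?case using list_emb_Cons2.hyps by (intro exI[of _ "0 # map Suc idx"]) (auto simp: sorted_wrt_map)
qed

lemma idx_subseq:
  "sorted_wrt (<) idx \<Longrightarrow> \<forall>i\<in>set idx. i < length xs \<Longrightarrow> subseq (map ((!) xs) idx) xs"
proof (induction xs arbitrary: idx)
  case Nil
  then show ?case by (cases idx) auto
next
  case (Cons x xs)
  show ?case
  proof (cases "0 \<in> set idx")
    case True
    then obtain rest where idx: "idx = 0 # rest"
    proof (cases idx)
      case Nil then show ?thesis using True by simp
    next
      case (Cons a list)
      then have "a = 0" using True Cons.prems(1) by (metis gr_zeroI not_less0 set_ConsD sorted_wrt.simps(2) local.Cons)
      then show ?thesis using Cons that by blast
    qed
    have pos: "\<forall>i\<in>set rest. 0 < i" using Cons.prems(1) idx by auto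
    have rest: "rest = map Suc (map (\<lambda>i. i - 1) rest)" using pos by (induction rest) auto
    have "subseq (map ((!) xs) (map (\<lambda>i. i - 1) rest)) xs"
    proof (rule Cons.IH)
      show "sorted_wrt (<) (map (\<lambda>i. i - 1) rest)"
        unfolding sorted_wrt_map apply (rule sorted_wrt_mono_rel[where P="(<)"]) using pos Cons.prems(1) idx by auto
      show "\<forall>i\<in>set (map (\<lambda>i. i - 1) rest). i < length xs" using Cons.prems(2) idx pos by auto
    qed
    note H = this
    have "map ((!) (x#xs)) rest = map ((!) xs) (map (\<lambda>i. i - 1) rest)"
      using pos by (induction rest) auto
    then have eq: "map ((!) (x#xs)) idx = x # map ((!) xs) (map (\<lambda>i. i - 1) rest)" using idx by simp
    show ?thesis unfolding eq by (rule list_emb_Cons2[OF refl H])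
  next
    case False
    have pos: "\<forall>i\<in>set idx. 0 < i" using False by (metis neq0_conv)
    have rest: "idx = map Suc (map (\<lambda>i. i - 1) idx)" using pos by (induction idx) auto
    have "subseq (map ((!) xs) (map (\<lambda>i. i - 1) idx)) xs"
    proof (rule Cons.IH)
      show "sorted_wrt (<) (map (\<lambda>i. i - 1) idx)"
        unfolding sorted_wrt_map apply (rule sorted_wrt_mono_rel[where P="(<)"]) using pos Cons.prems(1) by auto
      show "\<forall>i\<in>set (map (\<lambda>i. i - 1) idx). i < length xs" using Cons.prems(2) pos by auto
    qed
    note H = this
    have eq: "map ((!) (x#xs)) idx = map ((!) xs) (map (\<lambda>i. i - 1) idx)"
      using pos by (induction idx) auto
    show ?thesis unfolding eq by (rule list_emb_Cons) (rule H)
  qed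
qed

lemma contains_idx:
  "contains xs \<tau> \<longleftrightarrow> (\<exists>idx. length idx = length \<tau> \<and> sorted_wrt (<) idx \<and> (\<forall>i\<in>set idx. i < length xs) \<and> order_iso (map ((!) xs) idx) \<tau>)"
proof
  assume "contains xs \<tau>"
  then obtain s where s: "subseq s xs" "order_iso s \<tau>" unfolding contains_def by blast
  obtain idx where "length idx = length s \<and> sorted_wrt (<) idx \<and> (\<forall>i\<in>set idx. i < length xs) \<and> s = map ((!) xs) idx"
    using subseq_idx[OF s(1)] by blast
  then show "\<exists>idx. length idx = length \<tau> \<and> sorted_wrt (<) idx \<and> (\<forall>i\<in>set idx. i < length xs) \<and> order_iso (map ((!) xs) idx) \<tau>"
    using s(2) unfolding order_iso_def by auto
next
  assume "\<exists>idx. length idx = length \<tau> \<and> sorted_wrt (<) idx \<and> (\<forall>i\<in>set idx. i < length xs) \<and> order_iso (map ((!) xs) idx) \<tau>"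
  then obtain idx where "sorted_wrt (<) idx" "\<forall>i\<in>set idx. i < length xs" "order_iso (map ((!) xs) idx) \<tau>" by blast
  then show "contains xs \<tau>" unfolding contains_def using idx_subseq by blast
qed

lemma contains3:
  "contains xs [a,b,c] \<longleftrightarrow> (\<exists>i j k. i<j \<and> j<k \<and> k<length xs \<and> order_iso [xs!i,xs!j,xs!k] [a,b,c])"
proof
  assume "contains xs [a,b,c]"
  then obtain idx where h: "length idx = length [a,b,c]" "sorted_wrt (<) idx" "\<forall>i\<in>set idx. i < length xs" "order_iso (map ((!) xs) idx) [a,b,c]"
    unfolding contains_idx by blast
  then obtain i j k where "idx = [i,j,k]" by (auto simp: length_Suc_conv)
  then show "\<exists>i j k. i<j \<and> j<k \<and> k<length xs \<and> order_iso [xs!i,xs!j,xs!k] [a,b,c]" using h by auto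
next
  assume "\<exists>i j k. i<j \<and> j<k \<and> k<length xs \<and> order_iso [xs!i,xs!j,xs!k] [a,b,c]"
  then obtain i j k where h: "i<j" "j<k" "k<length xs" "order_iso [xs!i,xs!j,xs!k] [a,b,c]" by blast
  show "contains xs [a,b,c]" unfolding contains_idx
    by (rule exI[of _ "[i,j,k]"]) (use h in auto)
qed

lemma contains4:
  "contains xs [a,b,c,d] \<longleftrightarrow> (\<exists>i j k l. i<j \<and> j<k \<and> k<l \<and> l<length xs \<and> order_iso [xs!i,xs!j,xs!k,xs!l] [a,b,c,d])"
proof
  assume "contains xs [a,b,c,d]"
  then obtain idx where h: "length idx = length [a,b,c,d]" "sorted_wrt (<) idx" "\<forall>i\<in>set idx. i < length xs" "order_iso (map ((!) xs) idx) [a,b,c,d]"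
    unfolding contains_idx by blast
  then obtain i j k l where "idx = [i,j,k,l]" by (auto simp: length_Suc_conv)
  then show "\<exists>i j k l. i<j \<and> j<k \<and> k<l \<and> l<length xs \<and> order_iso [xs!i,xs!j,xs!k,xs!l] [a,b,c,d]" using h by auto
next
  assume "\<exists>i j k l. i<j \<and> j<k \<and> k<l \<and> l<length xs \<and> order_iso [xs!i,xs!j,xs!k,xs!l] [a,b,c,d]"
  then obtain i j k l where h: "i<j" "j<k" "k<l" "l<length xs" "order_iso [xs!i,xs!j,xs!k,xs!l] [a,b,c,d]" by blast
  show "contains xs [a,b,c,d]" unfolding contains_idx
    by (rule exI[of _ "[i,j,k,l]"]) (use h in auto)
qed

lemma all_less3: "(\<forall>i<3. P (i::nat)) \<longleftrightarrow> P 0 \<and> P 1 \<and> P 2"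
proof
  assume "\<forall>i<3. P i" then show "P 0 \<and> P 1 \<and> P 2" by simp
next
  assume h: "P 0 \<and> P 1 \<and> P 2"
  show "\<forall>i<3. P i"
  proof (intro allI impI)
    fix i :: nat assume "i < 3"
    then have "i = 0 \<or> i = 1 \<or> i = 2" by arith
    then show "P i" using h by auto
  qed
qed
lemma all_less4: "(\<forall>i<4. P (i::nat)) \<longleftrightarrow> P 0 \<and> P 1 \<and> P 2 \<and> P 3"
proof
  assume "\<forall>i<4. P i" then show "P 0 \<and> P 1 \<and> P 2 \<and> P 3" by simp
next
  assume h: "P 0 \<and> P 1 \<and> P 2 \<and> P 3"
  show "\<forall>i<4. P i"
  proof (intro allI impI)
    fix i :: nat assume "i < 4"
    then have "i = 0 \<or> i = 1 \<or> i = 2 \<or> i = 3" by arith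
    then show "P i" using h by auto
  qed
qed

lemma all_lessS3: "(\<forall>i<Suc (Suc (Suc 0)). P i) \<longleftrightarrow> P 0 \<and> P (Suc 0) \<and> P (Suc (Suc 0))"
  using all_less3[of P] by (simp add: eval_nat_numeral)
lemma all_lessS4: "(\<forall>i<Suc (Suc (Suc (Suc 0))). P i) \<longleftrightarrow> P 0 \<and> P (Suc 0) \<and> P (Suc (Suc 0)) \<and> P (Suc (Suc (Suc 0)))"
  using all_less4[of P] by (simp add: eval_nat_numeral)

lemma iso_021: "order_iso [x,y,z] [0,2,1] \<longleftrightarrow> x < z \<and> z < y"
  unfolding order_iso_def by (simp add: all_lessS3; arith)
lemma iso_0021: "order_iso [x,y,z,w] [0,0,2,1] \<longleftrightarrow> x = y \<and> y < w \<and> w < z"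
  unfolding order_iso_def by (simp add: all_lessS4; arith)
lemma iso_0121: "order_iso [x,y,z,w] [0,1,2,1] \<longleftrightarrow> x < y \<and> y = w \<and> w < z"
  unfolding order_iso_def by (simp add: all_lessS4; arith)
lemma iso_0132: "order_iso [x,y,z,w] [0,1,3,2] \<longleftrightarrow> x < y \<and> y < w \<and> w < z"
  unfolding order_iso_def by (simp add: all_lessS4; arith)



definition nzmono :: "nat list \<Rightarrow> bool" where
  "nzmono xs \<longleftrightarrow> (\<forall>i j. i < j \<and> j < length xs \<and> 0 < xs!i \<and> 0 < xs!j \<longrightarrow> xs!i \<le> xs!j)"

lemma asc_le: "asc ys \<le> length ys - 1"
proof -
  have "{j. Suc j < length ys \<and> ys ! j < ys ! Suc j} \<subseteq> {..<length ys - 1}" by auto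
  then show ?thesis unfolding asc_def by (metis card_lessThan card_mono finite_lessThan)
qed

lemma asc_pos_ex: "0 < asc ys \<Longrightarrow> \<exists>p. Suc p < length ys \<and> ys!p < ys!Suc p"
  unfolding asc_def by (metis (mono_tags, lifting) card.empty empty_Collect_eq less_irrefl)

lemma contains_021_iff:
  assumes "ascent_seq xs"
  shows "contains xs [0,2,1] \<longleftrightarrow> \<not> nzmono xs"
proof
  assume "contains xs [0,2,1]"
  then obtain i j k where h: "i<j" "j<k" "k<length xs" "xs!i < xs!k" "xs!k < xs!j"
    unfolding contains3 iso_021 by blast
  then show "\<not> nzmono xs" unfolding nzmono_def
    by (metis gr_zeroI leD not_less0 order.strict_trans)
next
  assume "\<not> nzmono xs"
  then obtain i j where h: "i < j" "j < length xs" "0 < xs!i" "0 < xs!j" "xs!j < xs!i"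
    unfolding nzmono_def by (meson not_le)
  have x0: "xs!0 = 0" using assms unfolding ascent_seq_def by blast
  have "0 < i" using h x0 by (metis gr0I less_irrefl)
  then show "contains xs [0,2,1]" unfolding contains3 iso_021
    using h x0 by (intro exI[of _ 0] exI[of _ i] exI[of _ j]) auto
qed

lemma c0021: "contains xs [0,0,2,1] \<Longrightarrow> contains xs [0,2,1]"
  unfolding contains3 contains4 iso_021 iso_0021
  by (metis order.strict_trans)
lemma c0121: "contains xs [0,1,2,1] \<Longrightarrow> contains xs [0,2,1]"
  unfolding contains3 contains4 iso_021 iso_0121
  by (metis order.strict_trans)
lemma c0132: "contains xs [0,1,3,2] \<Longrightarrow> contains xs [0,2,1]"
  unfolding contains3 contains4 iso_021 iso_0132
  by (metis order.strict_trans)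

lemma c021_imp:
  assumes as: "ascent_seq xs" and c: "contains xs [0,2,1]"
  shows "(contains xs [0,0,2,1] \<or> contains xs [0,1,2,1]) \<and> (contains xs [0,1,2,1] \<or> contains xs [0,1,3,2])"
proof -
  obtain i j k where h: "i<j" "j<k" "k<length xs" "xs!i < xs!k" "xs!k < xs!j"
    using c unfolding contains3 iso_021 by blast
  define a where "a = xs!k"
  have x0: "xs!0 = 0" using as unfolding ascent_seq_def by blast
  have apos: "0 < a" using h a_def by simp
  define j0 where "j0 = (LEAST j. j < k \<and> a < xs!j)"
  have P: "j0 < k \<and> a < xs!j0" unfolding j0_def a_def by (rule LeastI[of _ j]) (use h in auto)
  have below: "\<forall>q<j0. xs!q \<le> a"
  proof (intro allI impI)
    fix q assume "q < j0"
    then have "\<not> (q < k \<and> a < xs!q)" unfolding j0_def by (rule not_less_Least)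
    then show "xs!q \<le> a" using \<open>q < j0\<close> P by auto
  qed
  have j0pos: "0 < j0" using P x0 by (metis gr0I not_less0)
  have "xs!j0 \<le> asc (take j0 xs) + 1" using as P h j0pos unfolding ascent_seq_def by auto
  then have ascge: "a \<le> asc (take j0 xs)" using P by linarith
  have "asc (take j0 xs) \<le> j0 - 1" using asc_le[of "take j0 xs"] by simp
  then have j0big: "a < j0" using ascge j0pos by linarith
  show ?thesis
  proof (cases "\<exists>q. 0 < q \<and> q < j0 \<and> xs!q = a")
    case True
    then obtain q where q: "0 < q" "q < j0" "xs!q = a" by blast
    have "contains xs [0,1,2,1]" unfolding contains4 iso_0121
      using q P h x0 apos a_def by (intro exI[of _ 0] exI[of _ q] exI[of _ j0] exI[of _ k]) auto
    then show ?thesis by blast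
  next
    case False
    have lt: "\<forall>q<j0. xs!q < a"
    proof (intro allI impI)
      fix q assume "q < j0"
      show "xs!q < a"
      proof (cases "q = 0")
        case True then show ?thesis using x0 apos by simp
      next
        case False' : False
        then show ?thesis using False below \<open>q < j0\<close> by (metis le_neq_implies_less not_gr0 False')
      qed
    qed
    have "\<not> inj_on ((!) xs) {..<j0}"
    proof
      assume inj: "inj_on ((!) xs) {..<j0}"
      have "(!) xs ` {..<j0} \<subseteq> {..<a}" using lt by auto
      then have "card ((!) xs ` {..<j0}) \<le> a" by (metis card_lessThan card_mono finite_lessThan)
      then show False using card_image[OF inj] j0big by simp
    qed
    then obtain p q where pq: "p < j0" "q < j0" "p \<noteq> q" "xs!p = xs!q"
      unfolding inj_on_def by auto
    have c1: "contains xs [0,0,2,1]"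
    proof (cases "p < q")
      case True
      then show ?thesis unfolding contains4 iso_0021
        using pq P h lt a_def by (intro exI[of _ p] exI[of _ q] exI[of _ j0] exI[of _ k]) auto
    next
      case False
      then have "q < p" using pq by simp
      then show ?thesis unfolding contains4 iso_0021
        using pq P h lt a_def by (intro exI[of _ q] exI[of _ p] exI[of _ j0] exI[of _ k]) auto
    qed
    obtain p where p: "Suc p < length (take j0 xs)" "(take j0 xs)!p < (take j0 xs)!Suc p"
      using asc_pos_ex[of "take j0 xs"] ascge apos by auto
    have p2: "Suc p < j0" "xs!p < xs!Suc p" using p by auto
    have c2: "contains xs [0,1,3,2]" unfolding contains4 iso_0132
      using p2 lt P h a_def by (intro exI[of _ p] exI[of _ "Suc p"] exI[of _ j0] exI[of _ k]) auto
    show ?thesis using c1 c2 by blast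
  qed
qed

definition ours :: "nat \<Rightarrow> nat list set" where
  "ours n = {xs. ascent_seq xs \<and> length xs = n \<and> nzmono xs}"

lemma Sn_021: "Sn n {[0,2,1]} = ours n"
  unfolding Sn_def ours_def avoids_def using contains_021_iff by auto

lemma Sn_A: "Sn n {[0,0,2,1], [0,1,2,1]} = Sn n {[0,2,1]}"
  unfolding Sn_def avoids_def using c021_imp c0021 c0121 by blast

lemma Sn_B: "Sn n {[0,1,2,1], [0,1,3,2]} = Sn n {[0,2,1]}"
  unfolding Sn_def avoids_def using c021_imp c0132 c0121 by blast



definition ef :: "nat \<Rightarrow> nat \<Rightarrow> nat \<Rightarrow> real" where
  "ef m v s = (if v = 0 then 0 else if v = 1 then (if s = 0 then 1 else 0) else if s = 0 then 0
     else (real m + 1 - real v) / real m * real (m choose s) * real ((v-2) choose (s-1)))"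

definition cf :: "nat \<Rightarrow> nat \<Rightarrow> nat \<Rightarrow> real" where
  "cf m v s = (if v = 0 then 0 else if s = 0 then 1
     else real (m choose s) / real m * (real m * real ((v-1) choose s) - real s * real (v choose (s+1))))"

lemma absorb_real: "real (Suc k) * real (n choose Suc k) = real n * real ((n - 1) choose k)"
  using binomial_absorption[of k n] by (metis of_nat_mult)

lemma cf_step:
  assumes "1 \<le> m"
  shows "cf m (Suc v) s = cf m v s + ef m (Suc v) s"
proof (cases "s = 0")
  case True then show ?thesis by (simp add: cf_def ef_def)
next
  case False
  then obtain k where s: "s = Suc k" by (cases s) auto
  show ?thesis
  proof (cases "v = 0")
    case True
    then show ?thesis using s by (simp add: cf_def ef_def)
  next
    case False
    then obtain u where v: "v = Suc u" by (cases v) auto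
    have p1: "real (Suc u choose Suc k) = real (u choose k) + real (u choose Suc k)" by simp
    have p2: "real (Suc (Suc u) choose Suc (Suc k)) = real (Suc u choose Suc k) + real (Suc u choose Suc (Suc k))"
      by (simp only: binomial_Suc_Suc of_nat_add)
    have ab: "real (Suc k) * real (Suc u choose Suc k) = real (Suc u) * real (u choose k)"
      using absorb_real[of k "Suc u"] by simp
    have m0: "real m \<noteq> 0" using assms by simp
    have I: "real m * real (Suc u choose Suc k) - real (Suc k) * real (Suc (Suc u) choose Suc (Suc k))
        = real m * real (u choose Suc k) - real (Suc k) * real (Suc u choose Suc (Suc k)) + (real m + 1 - real (Suc (Suc u))) * real (u choose k)"
      using p1 p2 ab by (simp add: algebra_simps)
    have "cf m (Suc v) s = real (m choose s) / real m * (real m * real (Suc u choose Suc k) - real (Suc k) * real (Suc (Suc u) choose Suc (Suc k)))"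
      unfolding cf_def using s v by simp
    also have "\<dots> = real (m choose s) / real m * (real m * real (u choose Suc k) - real (Suc k) * real (Suc u choose Suc (Suc k)))
         + real (m choose s) / real m * ((real m + 1 - real (Suc (Suc u))) * real (u choose k))"
      unfolding I by (simp add: distrib_left)
    also have "\<dots> = cf m v s + ef m (Suc v) s"
      unfolding cf_def ef_def using s v by simp
    finally show ?thesis .
  qed
qed

lemma alg1: fixes M U k c a :: real assumes "0 < M" "0 \<le> k"
shows "(M + 1 + 1 - (U + 2)) / (M + 1) * ((M + 1) * c / (k + 2)) * a = (M + 1 - (U + 2)) / M * ((M - (k + 1)) * c / (k + 2)) * a + c / M * (M * a - (k + 1) * ((U + 1) * a / (k + 2)))"
proof -
  have d1: "M + 1 \<noteq> 0" "k + 2 \<noteq> 0" "M \<noteq> 0" using assms by auto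
  have L: "(M + 1 + 1 - (U + 2)) / (M + 1) * ((M + 1) * c / (k + 2)) * a = (M - U) * c * a / (k + 2)"
    using d1 by (simp add: divide_simps)
  have R: "(M + 1 - (U + 2)) / M * ((M - (k + 1)) * c / (k + 2)) * a + c / M * (M * a - (k + 1) * ((U + 1) * a / (k + 2)))
     = ((M - U - 1) * (M - k - 1) * c * a + c * (M * a * (k + 2) - (k + 1) * (U + 1) * a)) / (M * (k + 2))"
    using d1 by (simp add: divide_simps) (simp add: algebra_simps)
  have R2: "(M - U - 1) * (M - k - 1) * c * a + c * (M * a * (k + 2) - (k + 1) * (U + 1) * a) = M * ((M - U) * c * a)"
    by (simp add: algebra_simps)
  show ?thesis unfolding L R R2 using d1 by simp
qed

lemma absorb2_real: "real (Suc k) * real (m choose Suc k) = (real m - real k) * real (m choose k)"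
proof (cases "k \<le> m")
  case True
  have "Suc k * (m choose Suc k) = (m - k) * (m choose k)"
    using binomial_absorption[of k m] binomial_absorb_comp[of m k] by simp
  then have "real (Suc k * (m choose Suc k)) = real ((m - k) * (m choose k))" by simp
  then show ?thesis using True by (simp only: of_nat_mult of_nat_diff)
next
  case False
  then have "m choose k = 0" "m choose Suc k = 0" by auto
  then show ?thesis by (simp del: binomial_eq_0_iff)
qed

lemma ef_step:
  assumes "1 \<le> m" "0 < v"
  shows "ef (Suc m) v s = ef m v s + (if s = 0 then 0 else cf m (v-1) (s-1))"
proof -
  have m0: "real m \<noteq> 0" using assms by simp
  consider "v = 1" | u where "v = Suc (Suc u)" using assms by (metis One_nat_def not0_implies_Suc gr0_conv_Suc)
  then show ?thesis
  proof cases
    case 1 then show ?thesis by (simp add: ef_def cf_def)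
  next
    case (2 u)
    consider "s = 0" | "s = 1" | k where "s = Suc (Suc k)" by (metis One_nat_def not0_implies_Suc)
    then show ?thesis
    proof cases
      case 1 then show ?thesis using 2 by (simp add: ef_def cf_def)
    next
      case 3: 2
      then show ?thesis using 2 m0 by (simp add: ef_def cf_def field_simps)
    next
      case (3 k)
      define a where "a = real (u choose Suc k)"
      define c where "c = real (m choose Suc k)"
      have K0: "real (Suc (Suc k)) \<noteq> 0" by simp
      have e1: "real (Suc m choose Suc (Suc k)) = real (Suc m) * c / real (Suc (Suc k))"
        using absorb_real[of "Suc k" "Suc m"] K0 unfolding c_def by (simp add: field_simps)
      have e2: "real (m choose Suc (Suc k)) = (real m - real (Suc k)) * c / real (Suc (Suc k))"
        using absorb2_real[of "Suc k" m] K0 unfolding c_def by (simp add: field_simps)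
      have e3: "real (Suc u choose Suc (Suc k)) = real (Suc u) * a / real (Suc (Suc k))"
        using absorb_real[of "Suc k" "Suc u"] K0 unfolding a_def by (simp add: field_simps)
      have "ef (Suc m) v s = (real (Suc m) + 1 - real v) / real (Suc m) * (real (Suc m) * c / real (Suc (Suc k))) * a"
        unfolding ef_def using 2 3 e1 a_def by simp
      moreover have "ef m v s + (if s = 0 then 0 else cf m (v-1) (s-1)) =
          (real m + 1 - real v) / real m * ((real m - real (Suc k)) * c / real (Suc (Suc k))) * a
          + c / real m * (real m * a - real (Suc k) * (real (Suc u) * a / real (Suc (Suc k))))"
        unfolding ef_def cf_def using 2 3 e2 e3 a_def c_def by simp
      moreover have "(real (Suc m) + 1 - real v) / real (Suc m) * (real (Suc m) * c / real (Suc (Suc k))) * a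
          = (real m + 1 - real v) / real m * ((real m - real (Suc k)) * c / real (Suc (Suc k))) * a
          + c / real m * (real m * a - real (Suc k) * (real (Suc u) * a / real (Suc (Suc k))))"
        using alg1[of "real m" "real k" "real u" c a] assms 2 by (simp add: add.commute add.left_commute)
      ultimately show ?thesis by simp
    qed
  qed
qed

lemma cf_total:
  assumes "1 \<le> m"
  shows "cf m m s = real (m choose s) * real (m choose Suc s) / real m"
proof (cases "s = 0")
  case True then show ?thesis using assms by (simp add: cf_def)
next
  case False
  have ab: "real (Suc s) * real (m choose Suc s) = real m * real ((m - 1) choose s)"
    by (rule absorb_real)
  have "real m * real ((m - 1) choose s) - real s * real (m choose (s + 1)) = real (m choose Suc s)"
    using ab by (simp add: algebra_simps)
  then show ?thesis using False assms unfolding cf_def by simp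
qed



lemma inner_small:
  assumes "j < m"
  shows "(\<Sum>s<m. (m choose s) * (s choose j) * (m choose Suc s)) = (m choose j) * ((2*m - j) choose (m+1))"
proof -
  define r where "r = m - 1 - j"
  have "(\<Sum>s<m. (m choose s) * (s choose j) * (m choose Suc s)) = (\<Sum>s\<in>{j..<m}. (m choose s) * (s choose j) * (m choose Suc s))"
  proof (rule sum.mono_neutral_right)
    show "\<forall>i\<in>{..<m} - {j..<m}. (m choose i) * (i choose j) * (m choose Suc i) = 0" by auto
  qed auto
  also have "\<dots> = (\<Sum>t<m-j. (m choose (t+j)) * ((t+j) choose j) * (m choose Suc (t+j)))"
  proof -
    have "{j..<m} = {0+j..<(m-j)+j}" using assms by simp
    then show ?thesis using sum.shift_bounds_nat_ivl[of "\<lambda>s. (m choose s) * (s choose j) * (m choose Suc s)" 0 j "m-j"]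
      by (simp add: atLeast0LessThan)
  qed
  also have "\<dots> = (\<Sum>t\<le>r. (m choose j) * (((m-j) choose t) * (m choose (r - t))))"
  proof (rule sum.cong)
    show "{..<m-j} = {..r}" unfolding r_def using assms by auto
  next
    fix t assume t: "t \<in> {..r}"
    then have tr: "t + j + 1 \<le> m" unfolding r_def using assms by auto
    have "(m choose (t+j)) * ((t+j) choose j) = (m choose j) * ((m-j) choose t)"
      using choose_mult[of j "t+j" m] tr by simp
    moreover have "m choose Suc (t+j) = m choose (r - t)"
      using binomial_symmetric[of "Suc (t+j)" m] tr unfolding r_def
      by (metis Suc_eq_plus1 diff_diff_left add.commute)
    ultimately show "(m choose (t+j)) * ((t+j) choose j) * (m choose Suc (t+j)) = (m choose j) * (((m-j) choose t) * (m choose (r - t)))"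
      by simp
  qed
  also have "\<dots> = (m choose j) * (((m - j) + m) choose r)"
    by (simp add: sum_distrib_left[symmetric] vandermonde)
  also have "((m - j) + m) choose r = (2*m - j) choose (m+1)"
  proof -
    have e1: "(m - j) + m = 2*m - j" using assms by simp
    have e2: "(2*m - j) - r = m + 1" unfolding r_def using assms by simp
    have "r \<le> 2*m - j" unfolding r_def using assms by simp
    then have "(2*m - j) choose r = (2*m - j) choose ((2*m - j) - r)" by (rule binomial_symmetric)
    then show ?thesis using e1 e2 by simp
  qed
  finally show ?thesis .
qed

lemma inner_big:
  assumes "m \<le> j"
  shows "(\<Sum>s<m. (m choose s) * (s choose j) * (m choose Suc s)) = 0"
  using assms by (auto intro!: sum.neutral)

lemma main_identity:
  assumes "1 \<le> m" "m < n"
  shows "(\<Sum>s<m. (m choose s) * (m choose Suc s) * ((n+s) choose (2*m))) = (n choose (m+1)) * ((n-1) choose (m-1))"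
proof -
  have "(\<Sum>s<m. (m choose s) * (m choose Suc s) * ((n+s) choose (2*m)))
      = (\<Sum>s<m. \<Sum>j\<le>2*m. ((n choose (2*m - j)) * ((m choose s) * (s choose j) * (m choose Suc s))))"
  proof (rule sum.cong[OF refl])
    fix s
    have "(n+s) choose (2*m) = (\<Sum>j\<le>2*m. (s choose j) * (n choose (2*m - j)))"
      using vandermonde[of s n "2*m"] by (simp add: add.commute)
    then show "(m choose s) * (m choose Suc s) * ((n+s) choose (2*m)) = (\<Sum>j\<le>2*m. ((n choose (2*m - j)) * ((m choose s) * (s choose j) * (m choose Suc s))))"
      by (simp add: sum_distrib_left mult_ac)
  qed
  also have "\<dots> = (\<Sum>j\<le>2*m. (n choose (2*m - j)) * (\<Sum>s<m. (m choose s) * (s choose j) * (m choose Suc s)))"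
    by (subst sum.swap) (simp add: sum_distrib_left)
  also have "\<dots> = (\<Sum>j<m. (n choose (2*m - j)) * (\<Sum>s<m. (m choose s) * (s choose j) * (m choose Suc s)))"
  proof (rule sum.mono_neutral_right)
    show "\<forall>i\<in>{..2*m} - {..<m}. (n choose (2*m - i)) * (\<Sum>s<m. (m choose s) * (s choose i) * (m choose Suc s)) = 0"
      using inner_big by auto
  qed auto
  also have "\<dots> = (\<Sum>j<m. (n choose (m+1)) * ((m choose j) * ((n - (m+1)) choose (m - 1 - j))))"
  proof (rule sum.cong[OF refl])
    fix j assume j: "j \<in> {..<m}"
    then have jm: "j < m" by simp
    have "(n choose (2*m - j)) * ((2*m - j) choose (m+1)) = (n choose (m+1)) * ((n - (m+1)) choose (m - 1 - j))"
    proof (cases "2*m - j \<le> n")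
      case True
      have "(n choose (2*m - j)) * ((2*m - j) choose (m+1)) = (n choose (m+1)) * ((n - (m+1)) choose ((2*m - j) - (m+1)))"
        by (rule choose_mult) (use True jm in auto)
      moreover have "(2*m - j) - (m+1) = m - 1 - j" using jm by simp
      ultimately show ?thesis by (metis mult_0 mult_0_right)
    next
      case False
      then have "n - (m+1) < m - 1 - j" using jm assms by linarith
      then have "(n - (m+1)) choose (m - 1 - j) = 0" by (rule binomial_eq_0)
      moreover have "n choose (2*m - j) = 0" using False by (intro binomial_eq_0) simp
      ultimately show ?thesis by (metis mult_0 mult_0_right)
    qed
    then show "(n choose (2*m - j)) * (\<Sum>s<m. (m choose s) * (s choose j) * (m choose Suc s)) = (n choose (m+1)) * ((m choose j) * ((n - (m+1)) choose (m - 1 - j)))"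
      using inner_small[OF jm] by (simp add: mult_ac)
  qed
  also have "\<dots> = (n choose (m+1)) * (\<Sum>j\<le>m-1. (m choose j) * ((n - (m+1)) choose (m - 1 - j)))"
  proof -
    have "{..<m} = {..m-1}" using assms by auto
    then show ?thesis by (simp add: sum_distrib_left)
  qed
  also have "\<dots> = (n choose (m+1)) * ((n-1) choose (m-1))"
  proof -
    have "m + (n - (m+1)) = n - 1" using assms by simp
    then show ?thesis using vandermonde[of m "n - (m+1)" "m-1"] by simp
  qed
  finally show ?thesis .
qed



lemma asc_snoc:
  assumes "xs \<noteq> []"
  shows "asc (xs @ [x]) = asc xs + (if last xs < x then 1 else 0)"
proof -
  let ?S = "{j. Suc j < length xs \<and> xs!j < xs!Suc j}"
  have last: "last xs = xs ! (length xs - 1)" using assms by (simp add: last_conv_nth)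
  have eq: "{j. Suc j < length (xs@[x]) \<and> (xs@[x])!j < (xs@[x])!Suc j} = ?S \<union> (if last xs < x then {length xs - 1} else {})"
  proof (intro set_eqI iffI)
    fix j assume j: "j \<in> {j. Suc j < length (xs@[x]) \<and> (xs@[x])!j < (xs@[x])!Suc j}"
    show "j \<in> ?S \<union> (if last xs < x then {length xs - 1} else {})"
    proof (cases "Suc j < length xs")
      case True then show ?thesis using j by (auto simp: nth_append)
    next
      case False
      then have "j = length xs - 1" using j by auto
      then show ?thesis using j last assms by (auto simp: nth_append)
    qed
  next
    fix j assume "j \<in> ?S \<union> (if last xs < x then {length xs - 1} else {})"
    then show "j \<in> {j. Suc j < length (xs@[x]) \<and> (xs@[x])!j < (xs@[x])!Suc j}"
      using last assms by (auto simp: nth_append split: if_splits)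
  qed
  have fin: "finite ?S" by (rule finite_subset[of _ "{..<length xs}"]) auto
  have nin: "length xs - 1 \<notin> ?S" by auto
  show ?thesis unfolding asc_def eq using fin nin by auto
qed

definition wok :: "nat list \<Rightarrow> bool" where
  "wok w \<longleftrightarrow> sorted w \<and> (\<forall>t<length w. 0 < w!t \<and> w!t \<le> Suc t)"

lemma sorted_le_last: "sorted w \<Longrightarrow> y \<in> set w \<Longrightarrow> y \<le> last w"
proof -
  assume a: "sorted w" "y \<in> set w"
  then obtain i where i: "i < length w" "w ! i = y" by (auto simp: in_set_conv_nth)
  have ne: "w \<noteq> []" using a by auto
  have "w ! i \<le> w ! (length w - 1)" using a(1) i(1) by (intro sorted_nth_mono) auto
  then show ?thesis using i ne by (simp add: last_conv_nth)
qed

lemma wok_snoc: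
  "wok (w @ [v]) \<longleftrightarrow> wok w \<and> 0 < v \<and> v \<le> Suc (length w) \<and> (w \<noteq> [] \<longrightarrow> last w \<le> v)"
proof
  assume a: "wok (w @ [v])"
  have s: "sorted w" "\<forall>x\<in>set w. x \<le> v" using a unfolding wok_def by (auto simp: sorted_append)
  have n: "\<forall>t<length w. 0 < w!t \<and> w!t \<le> Suc t" using a unfolding wok_def
    by (metis (no_types, lifting) butlast_snoc length_append_singleton less_SucI nth_butlast)
  have v: "0 < v \<and> v \<le> Suc (length w)" using a unfolding wok_def
    by (metis length_append_singleton lessI nth_append_length)
  show "wok w \<and> 0 < v \<and> v \<le> Suc (length w) \<and> (w \<noteq> [] \<longrightarrow> last w \<le> v)"
    using s n v unfolding wok_def by auto
next
  assume a: "wok w \<and> 0 < v \<and> v \<le> Suc (length w) \<and> (w \<noteq> [] \<longrightarrow> last w \<le> v)"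
  then have "\<forall>x\<in>set w. x \<le> v" unfolding wok_def using sorted_le_last by (metis empty_iff le_trans list.set(1))
  then have "sorted (w @ [v])" using a unfolding wok_def by (auto simp: sorted_append)
  moreover have "\<forall>t<length (w@[v]). 0 < (w@[v])!t \<and> (w@[v])!t \<le> Suc t"
    using a unfolding wok_def by (auto simp: nth_append less_Suc_eq)
  ultimately show "wok (w @ [v])" unfolding wok_def by blast
qed

lemma wok_last: "wok w \<Longrightarrow> w \<noteq> [] \<Longrightarrow> 0 < last w \<and> last w \<le> length w"
proof -
  assume a: "wok w" "w \<noteq> []"
  have l: "length w - 1 < length w" using a(2) by simp
  have "0 < w ! (length w - 1) \<and> w ! (length w - 1) \<le> Suc (length w - 1)" using a(1) l unfolding wok_def by blast
  then show ?thesis using a(2) by (simp add: last_conv_nth)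
qed

definition Wm :: "nat \<Rightarrow> nat list set" where
  "Wm m = {w. wok w \<and> length w = m}"

lemma finite_Wm: "finite (Wm m)"
proof -
  have "Wm m \<subseteq> {w. set w \<subseteq> {..m} \<and> length w = m}"
    unfolding Wm_def wok_def by (auto simp: in_set_conv_nth) (metis Suc_leI le_trans)
  then show ?thesis by (rule finite_subset) (rule finite_lists_length_eq, simp)
qed

definition EE :: "nat \<Rightarrow> nat \<Rightarrow> nat \<Rightarrow> nat" where
  "EE m v s = card {w \<in> Wm m. last w = v \<and> asc w = s}"
definition CC :: "nat \<Rightarrow> nat \<Rightarrow> nat \<Rightarrow> nat" where
  "CC m v s = card {w \<in> Wm m. last w \<le> v \<and> asc w = s}"

lemma Wm_nonempty: "1 \<le> m \<Longrightarrow> w \<in> Wm m \<Longrightarrow> w \<noteq> []"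
  unfolding Wm_def by auto

lemma CC_Suc: "1 \<le> m \<Longrightarrow> CC m (Suc v) s = CC m v s + EE m (Suc v) s"
proof -
  assume m: "1 \<le> m"
  have "{w \<in> Wm m. last w \<le> Suc v \<and> asc w = s} = {w \<in> Wm m. last w \<le> v \<and> asc w = s} \<union> {w \<in> Wm m. last w = Suc v \<and> asc w = s}"
    by auto
  moreover have "card (\<dots>) = CC m v s + EE m (Suc v) s" unfolding CC_def EE_def
    by (rule card_Un_disjoint) (use finite_Wm in auto)
  ultimately show ?thesis unfolding CC_def by simp
qed

lemma Wm_last: "1 \<le> m \<Longrightarrow> w \<in> Wm m \<Longrightarrow> 0 < last w \<and> last w \<le> m"
  using wok_last Wm_nonempty unfolding Wm_def by fastforce

lemma CC_0: "1 \<le> m \<Longrightarrow> CC m 0 s = 0"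
proof -
  assume m: "1 \<le> m"
  have "{w \<in> Wm m. last w \<le> 0 \<and> asc w = s} = {}" using Wm_last[OF m] by fastforce
  then show ?thesis unfolding CC_def by (metis card.empty)
qed

lemma EE_0: "1 \<le> m \<Longrightarrow> EE m 0 s = 0"
proof -
  assume m: "1 \<le> m"
  have "{w \<in> Wm m. last w = 0 \<and> asc w = s} = {}" using Wm_last[OF m] by fastforce
  then show ?thesis unfolding EE_def by (metis card.empty)
qed

lemma EE_big: "1 \<le> m \<Longrightarrow> m < v \<Longrightarrow> EE m v s = 0"
proof -
  assume m: "1 \<le> m" "m < v"
  have "{w \<in> Wm m. last w = v \<and> asc w = s} = {}" using Wm_last[OF m(1)] m(2) by fastforce
  then show ?thesis unfolding EE_def by (metis card.empty)
qed

lemma EE_Suc: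
  assumes "1 \<le> m" "0 < v" "v \<le> Suc m"
  shows "EE (Suc m) v s = EE m v s + (if s = 0 then 0 else CC m (v-1) (s-1))"
proof -
  let ?A = "{w' \<in> Wm m. last w' = v \<and> asc w' = s}"
  let ?B = "{w' \<in> Wm m. last w' < v \<and> Suc (asc w') = s}"
  have eq: "{w \<in> Wm (Suc m). last w = v \<and> asc w = s} = (\<lambda>w'. w' @ [v]) ` (?A \<union> ?B)"
  proof (intro set_eqI iffI)
    fix w assume w: "w \<in> {w \<in> Wm (Suc m). last w = v \<and> asc w = s}"
    then have wne: "w \<noteq> []" unfolding Wm_def by auto
    define w' where "w' = butlast w"
    have wdec: "w = w' @ [v]" using w wne unfolding w'_def by auto
    have w'ne: "w' \<noteq> []" using w assms unfolding Wm_def w'_def by (cases w) auto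
    have ok: "wok w' \<and> 0 < v \<and> v \<le> Suc (length w') \<and> last w' \<le> v" using w w'ne unfolding Wm_def wdec
      using wok_snoc[of w' v] by auto
    have len: "length w' = m" using w unfolding Wm_def w'_def by auto
    have as: "asc w = asc w' + (if last w' < v then 1 else 0)" unfolding wdec using asc_snoc[OF w'ne] .
    show "w \<in> (\<lambda>w'. w' @ [v]) ` (?A \<union> ?B)"
    proof (cases "last w' < v")
      case True
      then have "w' \<in> ?B" using ok len as w unfolding Wm_def by auto
      then show ?thesis using wdec by blast
    next
      case False
      then have "w' \<in> ?A" using ok len as w unfolding Wm_def by auto
      then show ?thesis using wdec by blast
    qed
  next
    fix w assume "w \<in> (\<lambda>w'. w' @ [v]) ` (?A \<union> ?B)"
    then obtain w' where w': "w' \<in> ?A \<union> ?B" "w = w' @ [v]" by blast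
    have w'ne: "w' \<noteq> []" using w' assms Wm_nonempty by blast
    have "wok w" using w' assms wok_snoc[of w' v] unfolding Wm_def by auto
    moreover have "asc w = s" using w' asc_snoc[OF w'ne, of v] by auto
    ultimately show "w \<in> {w \<in> Wm (Suc m). last w = v \<and> asc w = s}" using w' unfolding Wm_def by auto
  qed
  have card: "card (?A \<union> ?B) = card ?A + card ?B"
    by (rule card_Un_disjoint) (use finite_Wm in auto)
  have B: "card ?B = (if s = 0 then 0 else CC m (v-1) (s-1))"
  proof (cases "s = 0")
    case True then show ?thesis by simp
  next
    case False
    have "?B = {w \<in> Wm m. last w \<le> v - 1 \<and> asc w = s - 1}" using False assms by auto
    then show ?thesis using False unfolding CC_def by simp
  qed
  have "card ((\<lambda>w'. w' @ [v]) ` (?A \<union> ?B)) = card (?A \<union> ?B)"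
    by (rule card_image) (auto simp: inj_on_def)
  then show ?thesis unfolding EE_def eq using card B by simp
qed

lemma Wm_1: "Wm 1 = {[1]}"
proof (intro set_eqI iffI)
  fix w assume "w \<in> Wm 1"
  then obtain a where "w = [a]" "0 < a" "a \<le> 1" unfolding Wm_def wok_def by (auto simp: length_Suc_conv)
  then show "w \<in> {[1]}" by simp
qed (auto simp: Wm_def wok_def)

lemma asc_single: "asc [a] = 0" unfolding asc_def by simp

lemma EE_formula: "1 \<le> m \<Longrightarrow> v \<le> Suc m \<Longrightarrow> real (EE m v s) = ef m v s"
proof (induction m arbitrary: v s rule: nat_induct_at_least)
  case base
  have "{w \<in> Wm 1. last w = v \<and> asc w = s} = (if v = 1 \<and> s = 0 then {[1]} else {})"
    unfolding Wm_1 by (auto simp: asc_single)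
  moreover have "ef 1 v s = (if v = 1 \<and> s = 0 then 1 else 0)"
    using base by (auto simp: ef_def le_Suc_eq)
  ultimately show ?case unfolding EE_def by simp
next
  case (Suc m)
  show ?case
  proof (cases "v = 0")
    case True then show ?thesis by (simp add: EE_0 ef_def)
  next
    case v0: False
    show ?thesis
    proof (cases "v = Suc (Suc m)")
      case True
      then show ?thesis using Suc.hyps by (simp add: EE_big ef_def)
    next
      case False
      then have vle: "v \<le> Suc m" using Suc.prems by simp
      have m1: "1 \<le> m" using Suc.hyps by simp
      have EEm: "\<And>u t. u \<le> Suc m \<Longrightarrow> real (EE m u t) = ef m u t" using Suc.IH by blast
      have CCf: "\<forall>u \<le> Suc m. real (CC m u t) = cf m u t" for t
      proof (intro allI impI)
        fix u assume "u \<le> Suc m"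
        then show "real (CC m u t) = cf m u t"
        proof (induction u)
          case 0 then show ?case using m1 by (simp add: CC_0 cf_def)
        next
          case (Suc u)
          have "real (CC m (Suc u) t) = real (CC m u t) + real (EE m (Suc u) t)"
            using CC_Suc[OF m1] by simp
          also have "\<dots> = cf m u t + ef m (Suc u) t" using Suc EEm by simp
          also have "\<dots> = cf m (Suc u) t" using cf_step[OF m1] by simp
          finally show ?case .
        qed
      qed
      have "real (EE (Suc m) v s) = real (EE m v s) + (if s = 0 then 0 else real (CC m (v-1) (s-1)))"
        using EE_Suc[of m v s] Suc.hyps(1) vle v0 by simp
      also have "\<dots> = ef m v s + (if s = 0 then 0 else cf m (v-1) (s-1))"
        using EEm[OF vle] CCf vle by simp
      also have "\<dots> = ef (Suc m) v s" using ef_step[OF Suc.hyps(1), of v s] v0 by simp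
      finally show ?thesis .
    qed
  qed
qed

lemma CC_formula: "1 \<le> m \<Longrightarrow> v \<le> Suc m \<Longrightarrow> real (CC m v s) = cf m v s"
proof (induction v)
  case 0 then show ?case by (simp add: CC_0 cf_def)
next
  case (Suc v)
  have "real (CC m (Suc v) s) = real (CC m v s) + real (EE m (Suc v) s)"
    using CC_Suc[OF Suc.prems(1)] by simp
  also have "\<dots> = cf m v s + ef m (Suc v) s" using Suc EE_formula by simp
  also have "\<dots> = cf m (Suc v) s" using cf_step[OF Suc.prems(1)] by simp
  finally show ?case .
qed

lemma Wm_count:
  assumes "1 \<le> m"
  shows "real (card {w \<in> Wm m. asc w = s}) = real (m choose s) * real (m choose Suc s) / real m"
proof -
  have "{w \<in> Wm m. asc w = s} = {w \<in> Wm m. last w \<le> m \<and> asc w = s}" using Wm_last[OF assms] by auto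
  then have "card {w \<in> Wm m. asc w = s} = CC m m s" unfolding CC_def by simp
  then show ?thesis using CC_formula[OF assms, of m s] cf_total[OF assms] by simp
qed



definition av :: "nat list \<Rightarrow> nat list" where
  "av xs = map (\<lambda>j. xs ! Suc j) (filter (\<lambda>j. xs ! j < xs ! Suc j) [0..<length xs - 1])"

lemma av_Nil: "av [] = []" unfolding av_def by simp
lemma av_single: "av [a] = []" unfolding av_def by simp

lemma av_snoc:
  assumes "xs \<noteq> []"
  shows "av (xs @ [x]) = av xs @ (if last xs < x then [x] else [])"
proof -
  let ?L = "length xs"
  obtain k where k: "?L = Suc k" using assms by (cases xs) auto
  have up: "[0..<?L] = [0..<?L - 1] @ [?L - 1]" unfolding k by simp
  have last: "last xs = xs ! (?L - 1)" using assms by (simp add: last_conv_nth)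
  have f: "filter (\<lambda>j. (xs@[x]) ! j < (xs@[x]) ! Suc j) [0..<?L - 1] = filter (\<lambda>j. xs ! j < xs ! Suc j) [0..<?L - 1]"
    by (rule filter_cong) (auto simp: nth_append)
  have g: "map (\<lambda>j. (xs@[x]) ! Suc j) (filter (\<lambda>j. xs ! j < xs ! Suc j) [0..<?L - 1]) = map (\<lambda>j. xs ! Suc j) (filter (\<lambda>j. xs ! j < xs ! Suc j) [0..<?L - 1])"
    by (rule map_cong) (auto simp: nth_append)
  have h: "(xs@[x]) ! (?L - 1) = last xs" "(xs@[x]) ! Suc (?L - 1) = x"
    using assms last by (auto simp: nth_append)
  show ?thesis unfolding av_def using up f g h by simp
qed

lemma asc_av: "asc xs = length (av xs)"
proof (induction xs rule: rev_induct)
  case Nil then show ?case by (simp add: asc_def av_Nil)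
next
  case (snoc x xs)
  show ?case
  proof (cases "xs = []")
    case True then show ?thesis by (simp add: asc_def av_single)
  next
    case False then show ?thesis using snoc asc_snoc[OF False] av_snoc[OF False] by simp
  qed
qed

lemma ascent_seq_snoc:
  assumes "xs \<noteq> []"
  shows "ascent_seq (xs @ [x]) \<longleftrightarrow> ascent_seq xs \<and> x \<le> asc xs + 1"
proof
  assume a: "ascent_seq (xs @ [x])"
  have "xs ! 0 = 0" using a assms unfolding ascent_seq_def by (simp add: nth_append)
  moreover have "\<forall>i. 0 < i \<and> i < length xs \<longrightarrow> xs ! i \<le> asc (take i xs) + 1"
  proof (intro allI impI)
    fix i assume i: "0 < i \<and> i < length xs"
    then have "(xs@[x]) ! i \<le> asc (take i (xs@[x])) + 1" using a unfolding ascent_seq_def by simp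
    then show "xs ! i \<le> asc (take i xs) + 1" using i by (simp add: nth_append)
  qed
  moreover have "x \<le> asc xs + 1"
  proof -
    have H: "\<forall>i. 0 < i \<and> i < length (xs@[x]) \<longrightarrow> (xs@[x])!i \<le> asc (take i (xs@[x])) + 1"
      using a unfolding ascent_seq_def by blast
    have "(xs@[x]) ! length xs \<le> asc (take (length xs) (xs@[x])) + 1"
      using assms by (intro H[rule_format]) simp
    then show ?thesis by simp
  qed
  ultimately show "ascent_seq xs \<and> x \<le> asc xs + 1" using assms unfolding ascent_seq_def by blast
next
  assume a: "ascent_seq xs \<and> x \<le> asc xs + 1"
  show "ascent_seq (xs @ [x])" unfolding ascent_seq_def
  proof (intro conjI allI impI)
    show "xs @ [x] \<noteq> []" by simp
    show "(xs @ [x]) ! 0 = 0" using a assms unfolding ascent_seq_def by (simp add: nth_append)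
    fix i assume i: "0 < i \<and> i < length (xs @ [x])"
    show "(xs @ [x]) ! i \<le> asc (take i (xs @ [x])) + 1"
    proof (cases "i < length xs")
      case True then show ?thesis using a i unfolding ascent_seq_def by (simp add: nth_append)
    next
      case False
      then have "i = length xs" using i by simp
      then show ?thesis using a by simp
    qed
  qed
qed

lemma nzmono_snoc:
  "nzmono (xs @ [x]) \<longleftrightarrow> nzmono xs \<and> (0 < x \<longrightarrow> (\<forall>y\<in>set xs. 0 < y \<longrightarrow> y \<le> x))"
proof
  assume a: "nzmono (xs @ [x])"
  have "nzmono xs" unfolding nzmono_def
  proof (intro allI impI)
    fix i j assume h: "i < j \<and> j < length xs \<and> 0 < xs ! i \<and> 0 < xs ! j"
    have H: "\<forall>i j. i < j \<and> j < length (xs@[x]) \<and> 0 < (xs@[x])!i \<and> 0 < (xs@[x])!j \<longrightarrow> (xs@[x])!i \<le> (xs@[x])!j"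
      using a unfolding nzmono_def .
    have "(xs@[x])!i \<le> (xs@[x])!j" using h by (intro H[rule_format]) (simp add: nth_append)
    then show "xs ! i \<le> xs ! j" using h by (simp add: nth_append)
  qed
  moreover have "0 < x \<longrightarrow> (\<forall>y\<in>set xs. 0 < y \<longrightarrow> y \<le> x)"
  proof (intro impI ballI)
    fix y assume "0 < x" "y \<in> set xs" "0 < y"
    then obtain i where "i < length xs" "xs ! i = y" by (auto simp: in_set_conv_nth)
    then show "y \<le> x" using a \<open>0 < x\<close> \<open>0 < y\<close> unfolding nzmono_def
      by (metis length_append_singleton lessI nth_append nth_append_length)
  qed
  ultimately show "nzmono xs \<and> (0 < x \<longrightarrow> (\<forall>y\<in>set xs. 0 < y \<longrightarrow> y \<le> x))" by blast
next
  assume a: "nzmono xs \<and> (0 < x \<longrightarrow> (\<forall>y\<in>set xs. 0 < y \<longrightarrow> y \<le> x))"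
  show "nzmono (xs @ [x])" unfolding nzmono_def
  proof (intro allI impI)
    fix i j assume ij: "i < j \<and> j < length (xs @ [x]) \<and> 0 < (xs @ [x]) ! i \<and> 0 < (xs @ [x]) ! j"
    show "(xs @ [x]) ! i \<le> (xs @ [x]) ! j"
    proof (cases "j < length xs")
      case True then show ?thesis using a ij unfolding nzmono_def by (auto simp: nth_append)
    next
      case False
      then have j: "j = length xs" using ij by simp
      then have "i < length xs" using ij by simp
      then show ?thesis using a ij j by (auto simp: nth_append)
    qed
  qed
qed

lemma ours_snoc:
  assumes "xs \<noteq> []"
  shows "xs @ [x] \<in> ours (Suc n) \<longleftrightarrow> xs \<in> ours n \<and> x \<le> asc xs + 1 \<and> (0 < x \<longrightarrow> (\<forall>y\<in>set xs. 0 < y \<longrightarrow> y \<le> x))"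
  unfolding ours_def using ascent_seq_snoc[OF assms] nzmono_snoc by auto

lemma ours_1: "ours 1 = {[0]}"
proof (intro set_eqI iffI)
  fix xs assume "xs \<in> ours 1"
  then obtain a where "xs = [a]" "ascent_seq [a]" unfolding ours_def by (auto simp: length_Suc_conv)
  then show "xs \<in> {[0]}" unfolding ascent_seq_def by simp
next
  fix xs :: "nat list" assume "xs \<in> {[0]}"
  then show "xs \<in> ours 1" unfolding ours_def ascent_seq_def nzmono_def by auto
qed

definition mx :: "nat list \<Rightarrow> nat" where "mx w = (if w = [] then 0 else last w)"

definition ivt :: "nat list \<Rightarrow> bool" where
  "ivt xs \<longleftrightarrow> wok (av xs) \<and> (\<forall>y\<in>set xs. y \<le> mx (av xs)) \<and> (av xs \<noteq> [] \<longrightarrow> last (av xs) \<in> set xs)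
     \<and> (0 < last xs \<longrightarrow> av xs \<noteq> [] \<and> last xs = last (av xs))"

lemma ours_nonempty: "xs \<in> ours n \<Longrightarrow> xs \<noteq> []"
  unfolding ours_def ascent_seq_def by auto

lemma ours_inv: "xs \<in> ours n \<Longrightarrow> ivt xs"
proof (induction xs arbitrary: n rule: rev_induct)
  case Nil then show ?case using ours_nonempty by blast
next
  case (snoc x xs)
  show ?case
  proof (cases "xs = []")
    case True
    then have "[x] \<in> ours 1" using snoc.prems unfolding ours_def by simp
    then have "x = 0" using ours_1 by auto
    then show ?thesis using True unfolding ivt_def by (simp add: av_single mx_def wok_def)
  next
    case ne: False
    obtain k where n: "n = Suc k" using snoc.prems unfolding ours_def by (cases n) auto
    have h: "xs \<in> ours k" "x \<le> asc xs + 1" "0 < x \<longrightarrow> (\<forall>y\<in>set xs. 0 < y \<longrightarrow> y \<le> x)"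
      using snoc.prems ours_snoc[OF ne, of x k] n by auto
    have I: "ivt xs" using snoc.IH h(1) by blast
    let ?w = "av xs"
    have wok: "wok ?w" and bd: "\<forall>y\<in>set xs. y \<le> mx ?w" and lw: "?w \<noteq> [] \<longrightarrow> last ?w \<in> set xs"
      and lx: "0 < last xs \<longrightarrow> ?w \<noteq> [] \<and> last xs = last ?w" using I unfolding ivt_def by auto
    have lwpos: "?w \<noteq> [] \<Longrightarrow> 0 < last ?w" using wok_last[OF wok] by blast
    have asc: "asc xs = length ?w" by (rule asc_av)
    show ?thesis
    proof (cases "last xs < x")
      case True
      have av: "av (xs @ [x]) = ?w @ [x]" using av_snoc[OF ne] True by simp
      have xpos: "0 < x" using True by simp
      have lwx: "?w \<noteq> [] \<longrightarrow> last ?w \<le> x" using h(3) xpos lw lwpos by blast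
      have "wok (?w @ [x])" unfolding wok_snoc using wok xpos h(2) asc lwx by simp
      moreover have "\<forall>y\<in>set (xs @ [x]). y \<le> x" using bd lwx unfolding mx_def
        by (auto split: if_splits)
      ultimately show ?thesis unfolding ivt_def av mx_def using xpos by simp
    next
      case False
      have av: "av (xs @ [x]) = ?w" using av_snoc[OF ne] False by simp
      have xle: "0 < x \<Longrightarrow> ?w \<noteq> [] \<and> x \<le> last ?w" using False lx by (metis gr0I leI not_less0 order.strict_trans1)
      have xge: "0 < x \<Longrightarrow> last ?w \<le> x" using h(3) lw lwpos xle by blast
      have "\<forall>y\<in>set (xs @ [x]). y \<le> mx ?w" using bd xle unfolding mx_def by auto
      then show ?thesis unfolding ivt_def av using wok lw xle xge by (auto simp: le_antisym)
    qed
  qed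
qed

lemma ours_len: "xs \<in> ours n \<Longrightarrow> length xs = n"
  unfolding ours_def by simp

lemma ours_bound: "xs \<in> ours n \<Longrightarrow> y \<in> set xs \<Longrightarrow> y \<le> n"
proof -
  assume a: "xs \<in> ours n" "y \<in> set xs"
  have I: "ivt xs" using ours_inv a(1) by blast
  then have "y \<le> mx (av xs)" using a(2) unfolding ivt_def by blast
  also have "\<dots> \<le> length (av xs)" unfolding mx_def using I wok_last unfolding ivt_def by auto
  also have "\<dots> = asc xs" by (simp add: asc_av)
  also have "\<dots> \<le> n" using asc_le[of xs] ours_len[OF a(1)] by simp
  finally show ?thesis .
qed

lemma finite_ours: "finite (ours n)"
proof -
  have "ours n \<subseteq> {xs. set xs \<subseteq> {..n} \<and> length xs = n}" using ours_bound ours_len by fastforce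
  then show ?thesis by (rule finite_subset) (rule finite_lists_length_eq, simp)
qed

definition Xz :: "nat \<Rightarrow> nat list \<Rightarrow> nat list set" where
  "Xz n w = {xs \<in> ours n. av xs = w \<and> last xs = 0}"
definition Xp :: "nat \<Rightarrow> nat list \<Rightarrow> nat list set" where
  "Xp n w = {xs \<in> ours n. av xs = w \<and> 0 < last xs}"

lemma finite_Xz: "finite (Xz n w)" unfolding Xz_def using finite_ours by simp
lemma finite_Xp: "finite (Xp n w)" unfolding Xp_def using finite_ours by simp

lemma Xp_Nil: "Xp n [] = {}"
  unfolding Xp_def using ours_inv unfolding ivt_def by fastforce

lemma snoc_dec: "xs \<in> ours (Suc n) \<Longrightarrow> 1 \<le> n \<Longrightarrow> xs = butlast xs @ [last xs] \<and> butlast xs \<noteq> []"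
proof -
  assume a: "xs \<in> ours (Suc n)" "1 \<le> n"
  have "length xs = Suc n" using a(1) by (rule ours_len)
  then show ?thesis using a(2) by (cases xs rule: rev_cases) auto
qed

lemma mx_cond:
  assumes "ys \<in> ours n" "0 < x"
  shows "(\<forall>y\<in>set ys. 0 < y \<longrightarrow> y \<le> x) \<longleftrightarrow> mx (av ys) \<le> x"
proof -
  have I: "ivt ys" using ours_inv assms(1) by blast
  show ?thesis
  proof
    assume h: "\<forall>y\<in>set ys. 0 < y \<longrightarrow> y \<le> x"
    show "mx (av ys) \<le> x"
    proof (cases "av ys = []")
      case True then show ?thesis unfolding mx_def by simp
    next
      case False
      then have "last (av ys) \<in> set ys" "0 < last (av ys)" using I wok_last unfolding ivt_def by auto
      then show ?thesis using h False unfolding mx_def by simp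
    qed
  next
    assume "mx (av ys) \<le> x"
    then show "\<forall>y\<in>set ys. 0 < y \<longrightarrow> y \<le> x" using I unfolding ivt_def by (meson le_trans)
  qed
qed

lemma Xz_Suc:
  assumes "1 \<le> n"
  shows "Xz (Suc n) w = (\<lambda>ys. ys @ [0]) ` (Xz n w \<union> Xp n w)"
proof (intro set_eqI iffI)
  fix xs assume xs: "xs \<in> Xz (Suc n) w"
  have xo: "xs \<in> ours (Suc n)" using xs unfolding Xz_def by simp
  have d: "xs = butlast xs @ [last xs]" "butlast xs \<noteq> []" using snoc_dec[OF xo assms] by blast+
  let ?ys = "butlast xs"
  have l0: "last xs = 0" using xs unfolding Xz_def by simp
  have "?ys @ [0] \<in> ours (Suc n)" using xs d l0 unfolding Xz_def by simp
  then have ys: "?ys \<in> ours n" using ours_snoc[OF d(2)] by blast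
  have "av xs = av ?ys" using av_snoc[OF d(2), of 0] d l0 by simp
  then have "?ys \<in> Xz n w \<union> Xp n w" using ys xs unfolding Xz_def Xp_def by auto
  moreover have "xs = ?ys @ [0]" using d(1) unfolding l0 .
  ultimately show "xs \<in> (\<lambda>ys. ys @ [0]) ` (Xz n w \<union> Xp n w)" by (rule rev_image_eqI)
next
  fix xs assume "xs \<in> (\<lambda>ys. ys @ [0]) ` (Xz n w \<union> Xp n w)"
  then obtain ys where ys: "ys \<in> Xz n w \<union> Xp n w" "xs = ys @ [0]" by blast
  have yo: "ys \<in> ours n" "av ys = w" using ys unfolding Xz_def Xp_def by auto
  have ne: "ys \<noteq> []" using yo ours_nonempty by blast
  have "xs \<in> ours (Suc n)" unfolding ys(2) using ours_snoc[OF ne] yo by simp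
  moreover have "av xs = w" unfolding ys(2) using av_snoc[OF ne, of 0] yo by simp
  ultimately show "xs \<in> Xz (Suc n) w" unfolding Xz_def ys(2) by simp
qed

lemma Xp_Suc:
  assumes n: "1 \<le> n" and wok: "wok w" and wne: "w \<noteq> []"
  shows "Xp (Suc n) w = (\<lambda>ys. ys @ [last ys]) ` Xp n w \<union>
      (\<lambda>ys. ys @ [last w]) ` (Xz n (butlast w) \<union> {ys \<in> Xp n (butlast w). last (butlast w) < last w})"
    (is "?L = ?A \<union> ?B")
proof (intro set_eqI iffI)
  fix xs assume xs: "xs \<in> ?L"
  have xo: "xs \<in> ours (Suc n)" using xs unfolding Xp_def by simp
  have d: "xs = butlast xs @ [last xs]" "butlast xs \<noteq> []" using snoc_dec[OF xo n] by blast+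
  let ?ys = "butlast xs"
  let ?x = "last xs"
  have xpos: "0 < ?x" and avx: "av xs = w" using xs unfolding Xp_def by auto
  have "?ys @ [?x] \<in> ours (Suc n)" using xs d unfolding Xp_def by simp
  then have ys: "?ys \<in> ours n" "?x \<le> asc ?ys + 1" "\<forall>y\<in>set ?ys. 0 < y \<longrightarrow> y \<le> ?x"
    using ours_snoc[OF d(2)] xpos by auto
  have I: "ivt ?ys" using ours_inv ys(1) by blast
  have av: "av xs = av ?ys @ (if last ?ys < ?x then [?x] else [])" using av_snoc[OF d(2), of ?x] d by simp
  show "xs \<in> ?A \<union> ?B"
  proof (cases "last ?ys < ?x")
    case True
    then have w: "w = av ?ys @ [?x]" using av avx by simp
    then have bw: "butlast w = av ?ys" "last w = ?x" by auto
    have "?ys \<in> Xz n (butlast w) \<union> {ys \<in> Xp n (butlast w). last (butlast w) < last w}"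
    proof (cases "last ?ys = 0")
      case True then show ?thesis using ys bw unfolding Xz_def by auto
    next
      case False
      then have "last ?ys = last (av ?ys)" using I unfolding ivt_def by simp
      then show ?thesis using ys bw False \<open>last ?ys < ?x\<close> unfolding Xp_def by auto
    qed
    moreover have "xs = ?ys @ [last w]" using d bw by simp
    ultimately have "xs \<in> ?B" by (rule rev_image_eqI)
    then show ?thesis by blast
  next
    case False
    then have w: "av ?ys = w" using av avx by simp
    have lpos: "0 < last ?ys" using False xpos by simp
    then have lw: "last ?ys = last w" using I w unfolding ivt_def by simp
    have "mx (av ?ys) \<le> ?x" using mx_cond[OF ys(1) xpos] ys(3) by blast
    then have "last ?ys \<le> ?x" using w wne lw unfolding mx_def by simp
    then have eq: "?x = last ?ys" using False by simp
    have "?ys \<in> Xp n w" using ys w lpos unfolding Xp_def by simp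
    moreover have "xs = ?ys @ [last ?ys]" using d eq by simp
    ultimately have "xs \<in> ?A" by (rule rev_image_eqI)
    then show ?thesis by blast
  qed
next
  fix xs assume "xs \<in> ?A \<union> ?B"
  then show "xs \<in> ?L"
  proof
    assume "xs \<in> ?A"
    then obtain ys where ys: "ys \<in> Xp n w" "xs = ys @ [last ys]" by blast
    have yo: "ys \<in> ours n" "av ys = w" "0 < last ys" using ys unfolding Xp_def by auto
    have ne: "ys \<noteq> []" using yo ours_nonempty by blast
    have I: "ivt ys" using ours_inv yo(1) by blast
    have lw: "last ys = last w" using I yo unfolding ivt_def by simp
    have "last w \<le> length w" using wok_last[OF wok wne] by simp
    then have c1: "last ys \<le> asc ys + 1" using lw yo asc_av[of ys] by simp
    have c2: "\<forall>y\<in>set ys. 0 < y \<longrightarrow> y \<le> last ys" using mx_cond[OF yo(1) yo(3)] yo lw wne unfolding mx_def by simp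
    have "xs \<in> ours (Suc n)" unfolding ys(2) using ours_snoc[OF ne] yo c1 c2 by simp
    moreover have "av xs = w" unfolding ys(2) using av_snoc[OF ne, of "last ys"] yo by simp
    ultimately show "xs \<in> ?L" unfolding Xp_def ys(2) using yo by simp
  next
    assume "xs \<in> ?B"
    then obtain ys where ys: "ys \<in> Xz n (butlast w) \<union> {ys \<in> Xp n (butlast w). last (butlast w) < last w}" "xs = ys @ [last w]" by blast
    let ?bw = "butlast w" and ?v = "last w"
    have wdec: "w = ?bw @ [?v]" using wne by simp
    have wk: "wok ?bw" "0 < ?v" "?v \<le> Suc (length ?bw)" "?bw \<noteq> [] \<longrightarrow> last ?bw \<le> ?v"
      using wok wok_snoc[of ?bw ?v] wdec by metis+
    have yo: "ys \<in> ours n" "av ys = ?bw" using ys unfolding Xz_def Xp_def by auto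
    have ne: "ys \<noteq> []" using yo ours_nonempty by blast
    have I: "ivt ys" using ours_inv yo(1) by blast
    have c1: "?v \<le> asc ys + 1" using wk yo asc_av[of ys] by simp
    have "mx (av ys) \<le> ?v" using wk yo unfolding mx_def by simp
    then have c2: "\<forall>y\<in>set ys. 0 < y \<longrightarrow> y \<le> ?v" using mx_cond[OF yo(1) wk(2)] by blast
    have lt: "last ys < ?v"
    proof (cases "last ys = 0")
      case True then show ?thesis using wk by simp
    next
      case False
      then have "ys \<in> Xp n ?bw" "last ?bw < ?v" using ys unfolding Xz_def by auto
      moreover have "last ys = last (av ys)" using I False unfolding ivt_def by simp
      ultimately show ?thesis using yo by simp
    qed
    have "xs \<in> ours (Suc n)" unfolding ys(2) using ours_snoc[OF ne] yo c1 c2 by simp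
    moreover have "av xs = w" unfolding ys(2) using av_snoc[OF ne, of ?v] yo lt wdec by simp
    ultimately show "xs \<in> ?L" unfolding Xp_def ys(2) using wk by simp
  qed
qed

lemma card_Xz_Suc:
  assumes "1 \<le> n"
  shows "card (Xz (Suc n) w) = card (Xz n w) + card (Xp n w)"
proof -
  have "card (Xz (Suc n) w) = card (Xz n w \<union> Xp n w)"
    unfolding Xz_Suc[OF assms] by (rule card_image) (auto simp: inj_on_def)
  also have "\<dots> = card (Xz n w) + card (Xp n w)"
    by (rule card_Un_disjoint[OF finite_Xz finite_Xp]) (auto simp: Xz_def Xp_def)
  finally show ?thesis .
qed

lemma card_Xp_Suc:
  assumes n: "1 \<le> n" and wok: "wok w" and wne: "w \<noteq> []"
  shows "card (Xp (Suc n) w) = card (Xp n w) + card (Xz n (butlast w))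
     + (if last (butlast w) < last w then card (Xp n (butlast w)) else 0)"
proof -
  let ?A = "(\<lambda>ys. ys @ [last ys]) ` Xp n w"
  let ?C = "Xz n (butlast w) \<union> {ys \<in> Xp n (butlast w). last (butlast w) < last w}"
  let ?B = "(\<lambda>ys. ys @ [last w]) ` ?C"
  have fC: "finite ?C" using finite_Xz finite_Xp by simp
  have disj: "?A \<inter> ?B = {}"
  proof (rule ccontr)
    assume "?A \<inter> ?B \<noteq> {}"
    then obtain ys ys' where h: "ys \<in> Xp n w" "ys' \<in> ?C" "ys @ [last ys] = ys' @ [last w]" by blast
    then have e: "ys = ys'" "last ys = last w" by auto
    have "0 < last ys" using h(1) unfolding Xp_def by simp
    then have "ys' \<in> Xp n (butlast w)" "last (butlast w) < last w" using h(2) e unfolding Xz_def by auto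
    moreover have "last ys' = last (av ys')" using ours_inv[of ys' n] \<open>0 < last ys\<close> e
      calculation(1) unfolding ivt_def Xp_def by auto
    ultimately show False using e unfolding Xp_def by auto
  qed
  have cA: "card ?A = card (Xp n w)" by (rule card_image) (auto simp: inj_on_def)
  have cB: "card ?B = card ?C" by (rule card_image) (auto simp: inj_on_def)
  have cC: "card ?C = card (Xz n (butlast w)) + (if last (butlast w) < last w then card (Xp n (butlast w)) else 0)"
  proof -
    have fB: "finite {ys \<in> Xp n (butlast w). last (butlast w) < last w}" using finite_Xp by simp
    have "card ?C = card (Xz n (butlast w)) + card {ys \<in> Xp n (butlast w). last (butlast w) < last w}"
      by (rule card_Un_disjoint[OF finite_Xz fB]) (auto simp: Xz_def Xp_def)
    moreover have "{ys \<in> Xp n (butlast w). last (butlast w) < last w} = (if last (butlast w) < last w then Xp n (butlast w) else {})"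
      by auto
    ultimately show ?thesis by simp
  qed
  have "card (Xp (Suc n) w) = card (?A \<union> ?B)" unfolding Xp_Suc[OF n wok wne] ..
  also have "\<dots> = card ?A + card ?B" by (rule card_Un_disjoint) (use finite_Xp fC disj in auto)
  finally show ?thesis using cA cB cC by simp
qed

lemma ours_S0: "ours (Suc 0) = {[0]}" using ours_1 by simp
lemma Xz_1: "Xz (Suc 0) w = (if w = [] then {[0]} else {})"
  unfolding Xz_def ours_S0 by (auto simp: av_single)
lemma Xp_1: "Xp (Suc 0) w = {}"
  unfolding Xp_def ours_S0 by auto

lemma X_formula:
  "wok w \<Longrightarrow> card (Xz (Suc k) w) = (k + asc w) choose (2 * length w) \<and>
     card (Xp (Suc k) w) = (if w = [] then 0 else (k + asc w) choose (2 * length w - 1))"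
proof (induction k arbitrary: w)
  case 0
  show ?case
  proof (cases "w = []")
    case True then show ?thesis by (simp add: Xz_1 Xp_1 asc_def)
  next
    case False
    have "asc w \<le> length w - 1" by (rule asc_le)
    moreover have "0 < length w" using False by simp
    ultimately have "asc w < 2 * length w" "asc w < 2 * length w - 1" by arith+
    then show ?thesis using False by (simp add: Xz_1 Xp_1)
  qed
next
  case (Suc k)
  have n1: "1 \<le> Suc k" by simp
  have IHw: "card (Xz (Suc k) w) = (k + asc w) choose (2 * length w)"
    "card (Xp (Suc k) w) = (if w = [] then 0 else (k + asc w) choose (2 * length w - 1))"
    using Suc.IH[OF Suc.prems] by auto
  have z: "card (Xz (Suc (Suc k)) w) = (Suc k + asc w) choose (2 * length w)"
  proof (cases "w = []")
    case True then show ?thesis using card_Xz_Suc[OF n1, of w] IHw by (simp add: asc_def)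
  next
    case False
    then have e: "2 * length w = Suc (2 * length w - 1)" by (cases w) auto
    have "card (Xz (Suc (Suc k)) w) = ((k + asc w) choose (2 * length w)) + ((k + asc w) choose (2 * length w - 1))"
      using card_Xz_Suc[OF n1, of w] IHw False by simp
    also have "\<dots> = (Suc k + asc w) choose (2 * length w)"
      by (subst (1 3) e) simp
    finally show ?thesis .
  qed
  have p: "card (Xp (Suc (Suc k)) w) = (if w = [] then 0 else (Suc k + asc w) choose (2 * length w - 1))"
  proof (cases "w = []")
    case True then show ?thesis by (simp add: Xp_Nil)
  next
    case wne: False
    let ?bw = "butlast w" and ?v = "last w"
    have wdec: "w = ?bw @ [?v]" using wne by simp
    have wk: "wok ?bw" using Suc.prems wok_snoc[of ?bw ?v] wdec by metis
    have IHb: "card (Xz (Suc k) ?bw) = (k + asc ?bw) choose (2 * length ?bw)"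
      "card (Xp (Suc k) ?bw) = (if ?bw = [] then 0 else (k + asc ?bw) choose (2 * length ?bw - 1))"
      using Suc.IH[OF wk] by auto
    have cs: "card (Xp (Suc (Suc k)) w) = card (Xp (Suc k) w) + card (Xz (Suc k) ?bw)
        + (if last ?bw < ?v then card (Xp (Suc k) ?bw) else 0)"
      by (rule card_Xp_Suc[OF n1 Suc.prems wne])
    show ?thesis
    proof (cases "?bw = []")
      case True
      then have w1: "w = [?v]" using wdec by simp
      have a0: "asc w = 0" using w1 by (metis asc_single)
      have lw1: "length w = 1" by (subst w1) simp
      have "card (Xp (Suc (Suc k)) w) = k + 1 + 0"
        using cs IHw IHb True a0 lw1 wne by (simp del: asc_def)
      then show ?thesis using a0 lw1 wne by simp
    next
      case bne: False
      define m' where "m' = length ?bw"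
      define s' where "s' = asc ?bw"
      have m'pos: "1 \<le> m'" unfolding m'_def using bne by (cases ?bw) auto
      have lw: "length w = Suc m'" unfolding m'_def using wne by simp
      have e1: "2 * length w - 1 = Suc (2 * m')" using lw by simp
      have e2: "2 * m' = Suc (2 * m' - 1)" using m'pos by simp
      have aw: "asc w = s' + (if last ?bw < ?v then 1 else 0)" unfolding s'_def
        using asc_snoc[OF bne, of ?v] wdec by simp
      show ?thesis
      proof (cases "last ?bw < ?v")
        case True
        have c1: "card (Xp (Suc (Suc k)) w) = ((k + Suc s') choose (Suc (2*m'))) + (((k + s') choose (2 * m')) + ((k + s') choose (2 * m' - 1)))"
          using cs IHw IHb True wne bne aw e1 unfolding m'_def s'_def by simp
        have c2: "((k + s') choose (2 * m')) + ((k + s') choose (2 * m' - 1)) = (Suc (k + s') choose (2 * m'))"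
          by (subst (1 3) e2) simp
        have c3: "((k + Suc s') choose (Suc (2*m'))) + (Suc (k + s') choose (2 * m')) = (Suc (Suc k + s') choose (Suc (2*m')))"
          by simp
        have "card (Xp (Suc (Suc k)) w) = (Suc (Suc k + s') choose (Suc (2*m')))"
          unfolding c1 c2 c3 ..
        then show ?thesis using aw True e1 wne by simp
      next
        case False
        have "card (Xp (Suc (Suc k)) w) = ((k + s') choose (Suc (2*m'))) + ((k + s') choose (2 * m'))"
          using cs IHw IHb False wne bne aw e1 unfolding m'_def s'_def by simp
        also have "\<dots> = (Suc k + s') choose (Suc (2*m'))" by simp
        finally show ?thesis using aw False e1 wne by simp
      qed
    qed
  qed
  show ?case using z p by blast
qed



lemma count_m:
  assumes "1 \<le> m" "k' = Suc k"
  shows "card {xs \<in> ours k'. asc xs = m} = (\<Sum>w\<in>Wm m. (k' + asc w) choose (2*m))"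
proof -
  have eq: "{xs \<in> ours k'. asc xs = m} = (\<Union>w\<in>Wm m. Xz k' w \<union> Xp k' w)"
  proof (intro set_eqI iffI)
    fix xs assume xs: "xs \<in> {xs \<in> ours k'. asc xs = m}"
    then have "av xs \<in> Wm m" using ours_inv[of xs k'] asc_av[of xs] unfolding ivt_def Wm_def by auto
    moreover have "xs \<in> Xz k' (av xs) \<union> Xp k' (av xs)" using xs unfolding Xz_def Xp_def by auto
    ultimately show "xs \<in> (\<Union>w\<in>Wm m. Xz k' w \<union> Xp k' w)" by blast
  next
    fix xs assume "xs \<in> (\<Union>w\<in>Wm m. Xz k' w \<union> Xp k' w)"
    then obtain w where "w \<in> Wm m" "xs \<in> Xz k' w \<union> Xp k' w" by blast
    then show "xs \<in> {xs \<in> ours k'. asc xs = m}" unfolding Xz_def Xp_def Wm_def using asc_av[of xs] by auto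
  qed
  have "card (\<Union>w\<in>Wm m. Xz k' w \<union> Xp k' w) = (\<Sum>w\<in>Wm m. card (Xz k' w \<union> Xp k' w))"
    by (rule card_UN_disjoint) (simp add: finite_Wm, simp add: finite_Xz finite_Xp, auto simp: Xz_def Xp_def)
  also have "\<dots> = (\<Sum>w\<in>Wm m. (k' + asc w) choose (2*m))"
  proof (rule sum.cong[OF refl])
    fix w assume w: "w \<in> Wm m"
    then have wk: "wok w" and lw: "length w = m" unfolding Wm_def by auto
    have wne: "w \<noteq> []" using w assms Wm_nonempty by blast
    have "card (Xz k' w \<union> Xp k' w) = card (Xz k' w) + card (Xp k' w)"
      by (rule card_Un_disjoint[OF finite_Xz finite_Xp]) (auto simp: Xz_def Xp_def)
    also have "\<dots> = ((k + asc w) choose (2*m)) + ((k + asc w) choose (2*m - 1))"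
      using X_formula[OF wk, of k] wne lw assms by simp
    also have "\<dots> = (k' + asc w) choose (2*m)"
    proof -
      have e: "2*m = Suc (2*m - 1)" using assms by simp
      show ?thesis using assms(2) by (subst (1 3) e) simp
    qed
    finally show "card (Xz k' w \<union> Xp k' w) = (k' + asc w) choose (2*m)" .
  qed
  finally show ?thesis using eq by simp
qed

lemma count_real:
  assumes "1 \<le> m" "m < n"
  shows "real (card {xs \<in> ours n. asc xs = m}) = narayana n (m + 1)"
proof -
  obtain k where n: "n = Suc k" using assms by (cases n) auto
  have "card {xs \<in> ours n. asc xs = m} = (\<Sum>w\<in>Wm m. (n + asc w) choose (2*m))"
    using count_m[OF assms(1) n] .
  also have "\<dots> = (\<Sum>s<m. (\<Sum>w\<in>{w \<in> Wm m. asc w = s}. (n + asc w) choose (2*m)))"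
  proof (rule sum.group[symmetric])
    show "finite (Wm m)" by (rule finite_Wm)
    show "finite {..<m}" by simp
    show "asc ` Wm m \<subseteq> {..<m}"
    proof
      fix s assume "s \<in> asc ` Wm m"
      then obtain w where "w \<in> Wm m" "s = asc w" by blast
      then show "s \<in> {..<m}" using asc_le[of w] assms unfolding Wm_def by auto
    qed
  qed
  also have "\<dots> = (\<Sum>s<m. card {w \<in> Wm m. asc w = s} * ((n + s) choose (2*m)))"
    by (rule sum.cong[OF refl]) simp
  finally have c: "card {xs \<in> ours n. asc xs = m} = (\<Sum>s<m. card {w \<in> Wm m. asc w = s} * ((n + s) choose (2*m)))" .
  have "real (card {xs \<in> ours n. asc xs = m}) = (\<Sum>s<m. real (card {w \<in> Wm m. asc w = s}) * real ((n + s) choose (2*m)))"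
    unfolding c by simp
  also have "\<dots> = (\<Sum>s<m. real (m choose s) * real (m choose Suc s) / real m * real ((n + s) choose (2*m)))"
    using Wm_count[OF assms(1)] by simp
  also have "\<dots> = real (\<Sum>s<m. (m choose s) * (m choose Suc s) * ((n+s) choose (2*m))) / real m"
    by (simp add: sum_divide_distrib)
  also have "\<dots> = real ((n choose (m+1)) * ((n-1) choose (m-1))) / real m"
    using main_identity[OF assms] by simp
  also have "\<dots> = narayana n (m + 1)"
  proof -
    have ab: "Suc (m-1) * (n choose Suc (m-1)) = n * ((n - 1) choose (m-1))" by (rule binomial_absorption)
    then have "real m * real (n choose m) = real n * real ((n - 1) choose (m-1))" using assms
      by (metis Suc_pred' less_le_trans of_nat_mult zero_less_one)
    then have eq: "real ((n - 1) choose (m-1)) / real m = real (n choose m) / real n"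
      using assms by (simp add: field_simps)
    have "real ((n choose (m+1)) * ((n-1) choose (m-1))) / real m = real (n choose (m+1)) * (real ((n-1) choose (m-1)) / real m)"
      by simp
    also have "\<dots> = real (n choose (m+1)) * (real (n choose m) / real n)" using eq by simp
    also have "\<dots> = narayana n (m + 1)" unfolding narayana_def by simp
    finally show ?thesis .
  qed
  finally show ?thesis .
qed

lemma count_real0:
  assumes "0 < n"
  shows "real (card {xs \<in> ours n. asc xs = 0}) = narayana n 1"
proof -
  obtain k where n: "n = Suc k" using assms by (cases n) auto
  have "{xs \<in> ours n. asc xs = 0} = Xz n [] \<union> Xp n []"
    unfolding Xz_def Xp_def using asc_av by auto
  also have "\<dots> = Xz n []" by (simp add: Xp_Nil)
  finally have "card {xs \<in> ours n. asc xs = 0} = 1"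
    using X_formula[of "[]" k] n by (simp add: wok_def asc_def)
  then show ?thesis unfolding narayana_def using assms by simp
qed

theorem proposition1:
  fixes n :: nat
  assumes "n \<ge> 1"
  shows "Sn n {[0,0,2,1], [0,1,2,1]} = Sn n {[0,1,2,1], [0,1,3,2]}
     \<and> Sn n {[0,1,2,1], [0,1,3,2]} = Sn n {[0,2,1]}
     \<and> (\<forall>m<n. Snm n m {[0,0,2,1], [0,1,2,1]} = Snm n m {[0,1,2,1], [0,1,3,2]}
             \<and> real (Snm n m {[0,1,2,1], [0,1,3,2]}) = narayana n (m + 1))"
proof (intro conjI allI impI)
  show A: "Sn n {[0,0,2,1], [0,1,2,1]} = Sn n {[0,1,2,1], [0,1,3,2]}" using Sn_A Sn_B by simp
  show "Sn n {[0,1,2,1], [0,1,3,2]} = Sn n {[0,2,1]}" by (rule Sn_B)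
  fix m assume m: "m < n"
  show "Snm n m {[0,0,2,1], [0,1,2,1]} = Snm n m {[0,1,2,1], [0,1,3,2]}"
    unfolding Snm_def Snm_set_def using A by simp
  have S: "Snm_set n m {[0,1,2,1], [0,1,3,2]} = {xs \<in> ours n. asc xs = m}"
    unfolding Snm_set_def Sn_B Sn_021 ..
  show "real (Snm n m {[0,1,2,1], [0,1,3,2]}) = narayana n (m + 1)"
  proof (cases "m = 0")
    case True then show ?thesis unfolding Snm_def S using count_real0 assms by simp
  next
    case False then show ?thesis unfolding Snm_def S using count_real[of m n] m by simp
  qed
qed


end
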